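(* Let $\psi$ be an injective map from the positive integers to the positive integers and let $A=\{\psi(n): n\ge 1\}$. Let $\alpha$ be a positive even integer. For every nonnegative integer $n$, \[ \bar{p}^{A}(n)=\sum_{(N_0,N_1,N_2,\dots)}\ \prod_{j\ge0}\bar{p}^{A}_{\alpha}(N_j), \] where the sum runs over all sequences $(N_0,N_1,\dots)$ of nonnegative integers with $n=\sum_{i\ge0}(\alpha+1)^{i}N_i$.
   Context: For a set $A$ of positive integers: $\bar{p}^{A}(n)=E^{A}(n)-O^{A}(n)$, where $E^{A}(n)$ (resp. $O^{A}(n)$) is the number of partitions of $n$ into parts from $A$ (no restriction on multiplicities) with an even (resp. odd) number of parts, and $\bar{p}^{A}(0)=1$. For a positive integer $\alpha$, $\bar{p}^{A}_{\alpha}(n)=E^{A}_{\alpha}(n)-O^{A}_{\alpha}(n)$, where $E^{A}_{\alpha}(n)$ (resp. $O^{A}_{\alpha}(n)$) is the number of partitions of $n$ into parts from $A$ in which each part occurs at most $\alpha$ times and having an even (resp. odd) number of parts, and $\bar{p}^{A}_{\alpha}(0)=1$. *)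

theory Defs
  imports Main "HOL-Library.Multiset" "HOL-Library.Groups_Big_Fun"
begin

definition E_part :: "nat set \<Rightarrow> nat \<Rightarrow> nat" where
  "E_part A n = card {M :: nat multiset. set_mset M \<subseteq> A \<and> sum_mset M = n \<and> even (size M)}"

definition O_part :: "nat set \<Rightarrow> nat \<Rightarrow> nat" where
  "O_part A n = card {M :: nat multiset. set_mset M \<subseteq> A \<and> sum_mset M = n \<and> odd (size M)}"

definition pbar :: "nat set \<Rightarrow> nat \<Rightarrow> int" where
  "pbar A n = (if n = 0 then 1 else int (E_part A n) - int (O_part A n))"

definition E_part_bd :: "nat set \<Rightarrow> nat \<Rightarrow> nat \<Rightarrow> nat" where
  "E_part_bd A \<alpha> n = card {M :: nat multiset. set_mset M \<subseteq> A \<and> sum_mset M = n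
      \<and> (\<forall>k. count M k \<le> \<alpha>) \<and> even (size M)}"

definition O_part_bd :: "nat set \<Rightarrow> nat \<Rightarrow> nat \<Rightarrow> nat" where
  "O_part_bd A \<alpha> n = card {M :: nat multiset. set_mset M \<subseteq> A \<and> sum_mset M = n
      \<and> (\<forall>k. count M k \<le> \<alpha>) \<and> odd (size M)}"

definition pbar_bd :: "nat set \<Rightarrow> nat \<Rightarrow> nat \<Rightarrow> int" where
  "pbar_bd A \<alpha> n = (if n = 0 then 1 else int (E_part_bd A \<alpha> n) - int (O_part_bd A \<alpha> n))"

end

theory Submission
  imports Defs "HOL-Library.FuncSet"
begin

lemma digits_sum:
  fixes b :: nat assumes "b > 0"
  shows "c < b ^ K \<Longrightarrow> (\<Sum>j<K. b^j * (c div b^j mod b)) = c"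
proof (induction K arbitrary: c)
  case 0 then show ?case by simp
next
  case (Suc K)
  have "c div b < b ^ K" using Suc.prems assms
    by (simp add: div_less_iff_less_mult mult.commute)
  then have IH: "(\<Sum>j<K. b^j * (c div b div b^j mod b)) = c div b" using Suc.IH by blast
  have "(\<Sum>j<Suc K. b^j * (c div b^j mod b)) = c mod b + (\<Sum>j<K. b^Suc j * (c div b^Suc j mod b))"
    unfolding sum.lessThan_Suc_shift by simp
  also have "(\<Sum>j<K. b^Suc j * (c div b^Suc j mod b)) = b * (\<Sum>j<K. b^j * (c div b div b^j mod b))"
    by (simp add: sum_distrib_left div_mult2_eq mult.assoc)
  finally show ?case using IH by simp
qed

lemma digits_unique:
  fixes b :: nat assumes "b > 0"
  shows "(\<forall>j<K. d j < b) \<Longrightarrow> i < K \<Longrightarrow> (\<Sum>j<K. b^j * d j) div b^i mod b = d i"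
proof (induction K arbitrary: d i)
  case 0 then show ?case by simp
next
  case (Suc K)
  have eq: "(\<Sum>j<Suc K. b^j * d j) = d 0 + b * (\<Sum>j<K. b^j * d (Suc j))"
    unfolding sum.lessThan_Suc_shift by (simp add: sum_distrib_left mult.assoc)
  show ?case
  proof (cases i)
    case 0 then show ?thesis using eq Suc.prems by simp
  next
    case (Suc i')
    have "(\<Sum>j<Suc K. b^j * d j) div b^i = (d 0 + b * (\<Sum>j<K. b^j * d (Suc j))) div b div b^i'"
      using eq Suc by (simp add: div_mult2_eq)
    also have "(d 0 + b * (\<Sum>j<K. b^j * d (Suc j))) div b = (\<Sum>j<K. b^j * d (Suc j))"
      using Suc.prems(1) assms by simp
    finally show ?thesis using Suc.IH[of "\<lambda>j. d (Suc j)" i'] Suc.prems Suc by simp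
  qed
qed

definition Pt :: "nat set \<Rightarrow> nat \<Rightarrow> nat multiset set" where
  "Pt A n = {M. set_mset M \<subseteq> A \<and> sum_mset M = n}"
definition Pb :: "nat set \<Rightarrow> nat \<Rightarrow> nat \<Rightarrow> nat multiset set" where
  "Pb A a n = {M. set_mset M \<subseteq> A \<and> sum_mset M = n \<and> (\<forall>k. count M k \<le> a)}"
definition Phi :: "nat \<Rightarrow> nat \<Rightarrow> (nat \<Rightarrow> nat multiset) \<Rightarrow> nat multiset" where
  "Phi b K Ms = (\<Sum>j<K. repeat_mset (b^j) (Ms j))"
definition Psi :: "nat \<Rightarrow> nat multiset \<Rightarrow> nat \<Rightarrow> nat multiset" where
  "Psi b M j = (\<Sum>a\<in>set_mset M. replicate_mset (count M a div b^j mod b) a)"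

lemma count_Phi: "count (Phi b K Ms) x = (\<Sum>j<K. b^j * count (Ms j) x)"
  unfolding Phi_def by (simp add: count_sum)

lemma count_Psi: "count (Psi b M j) x = count M x div b^j mod b"
proof -
  have "count (Psi b M j) x = (\<Sum>a\<in>set_mset M. if x = a then count M a div b^j mod b else 0)"
    unfolding Psi_def count_sum by (simp add: count_replicate_mset)
  also have "\<dots> = (if x \<in> set_mset M then count M x div b^j mod b else 0)"
    by (simp add: sum.delta)
  finally show ?thesis by (simp add: not_in_iff)
qed

lemma sum_mset_repeat: "sum_mset (repeat_mset k M) = k * sum_mset (M :: nat multiset)"
  by (induction k) auto

lemma sum_mset_Phi: "sum_mset (Phi b K Ms) = (\<Sum>j<K. b^j * sum_mset (Ms j))"
  unfolding Phi_def by (induction K) (auto simp: sum_mset_repeat)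

lemma size_Phi: "size (Phi b K Ms) = (\<Sum>j<K. b^j * size (Ms j))"
  unfolding Phi_def by (induction K) auto

lemma sign_Phi:
  assumes "odd b"
  shows "(-1::int) ^ size (Phi b K Ms) = (\<Prod>j<K. (-1) ^ size (Ms j))"
proof -
  have "(-1::int) ^ (\<Sum>j<K. b^j * size (Ms j)) = (\<Prod>j<K. (-1) ^ size (Ms j))"
  proof (induction K)
    case 0 then show ?case by simp
  next
    case (Suc K)
    have "(-1::int) ^ (b^K * size (Ms K)) = (-1) ^ size (Ms K)"
      using assms by (simp add: power_mult)
    then show ?case using Suc by (simp add: power_add)
  qed
  then show ?thesis by (simp add: size_Phi)
qed

lemma size_le_sum: "0 \<notin> set_mset M \<Longrightarrow> size M \<le> sum_mset (M :: nat multiset)"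
  by (induction M) auto

lemma finite_Pt:
  assumes "0 \<notin> A" shows "finite (Pt A n)"
proof -
  have sub: "count ` Pt A n \<subseteq> {f. \<forall>x. (x \<in> {..n} \<longrightarrow> f x \<in> {..n}) \<and> (x \<notin> {..n} \<longrightarrow> f x = 0)}"
  proof
    fix f assume "f \<in> count ` Pt A n"
    then obtain M where M: "set_mset M \<subseteq> A" "n = sum_mset M" and f: "f = count M"
      by (auto simp: Pt_def)
    have "0 \<notin> set_mset M" using M assms by auto
    then have s: "size M \<le> n" using M size_le_sum by simp
    have a: "\<And>x. count M x \<le> n" using s count_le_size[of M] le_trans by metis
    have b: "\<And>x. n < x \<Longrightarrow> count M x = 0"
    proof (rule ccontr)
      fix x assume "n < x" "count M x \<noteq> 0"
      then have "x \<in># M" by (simp add: count_inI)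
      then have "sum_mset M = x + sum_mset (M - {#x#})" by (rule sum_mset.remove)
      then have "x \<le> sum_mset M" by linarith
      then show False using \<open>n < x\<close> M by simp
    qed
    show "f \<in> {f. \<forall>x. (x \<in> {..n} \<longrightarrow> f x \<in> {..n}) \<and> (x \<notin> {..n} \<longrightarrow> f x = 0)}"
      using a b f by auto
  qed
  have "finite (count ` Pt A n)"
    by (rule finite_subset[OF sub finite_set_of_finite_funs]) auto
  then show ?thesis
    by (rule finite_imageD) (auto simp: inj_on_def multiset_eq_iff)
qed

lemma finite_Pb: "0 \<notin> A \<Longrightarrow> finite (Pb A a n)"
  by (rule finite_subset[OF _ finite_Pt[of A n]]) (auto simp: Pb_def Pt_def)

lemma sign_sum_eq:
  assumes "finite P"
  shows "(\<Sum>M\<in>P. (-1::int) ^ size M) = int (card {M\<in>P. even (size M)}) - int (card {M\<in>P. odd (size M)})"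
proof -
  have "(\<Sum>M\<in>P. (-1::int) ^ size M) = (\<Sum>M\<in>P. if even (size M) then 1 else -1)"
    by (rule sum.cong) auto
  also have "\<dots> = (\<Sum>M\<in>P \<inter> {M. even (size M)}. 1) + (\<Sum>M\<in>P \<inter> - {M. even (size M)}. -1)"
    using assms by (rule sum.If_cases)
  also have "P \<inter> {M. even (size M)} = {M\<in>P. even (size M)}" by auto
  also have "P \<inter> - {M. even (size M)} = {M\<in>P. odd (size M)}" by auto
  finally show ?thesis by simp
qed

lemma Pt0: "0 \<notin> A \<Longrightarrow> Pt A 0 = {{#}}"
proof -
  assume A: "0 \<notin> A"
  have "M = {#}" if "set_mset M \<subseteq> A" "sum_mset M = 0" for M
    using size_le_sum[of M] that A by auto
  then show ?thesis by (auto simp: Pt_def)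
qed

lemma pbar_eq: assumes "0 \<notin> A" shows "pbar A n = (\<Sum>M\<in>Pt A n. (-1) ^ size M)"
proof (cases "n = 0")
  case True then show ?thesis using Pt0[OF assms] by (simp add: pbar_def)
next
  case False
  have "E_part A n = card {M\<in>Pt A n. even (size M)}" "O_part A n = card {M\<in>Pt A n. odd (size M)}"
    unfolding E_part_def O_part_def Pt_def by (rule arg_cong[where f=card]; auto)+
  then show ?thesis using False sign_sum_eq[OF finite_Pt[OF assms]] by (simp add: pbar_def)
qed

lemma pbar_bd_eq: assumes "0 \<notin> A" shows "pbar_bd A a n = (\<Sum>M\<in>Pb A a n. (-1) ^ size M)"
proof (cases "n = 0")
  case True
  have "Pb A a 0 = {{#}}" using Pt0[OF assms] by (auto simp: Pb_def Pt_def)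
  then show ?thesis using True by (simp add: pbar_bd_def)
next
  case False
  have "E_part_bd A a n = card {M\<in>Pb A a n. even (size M)}" "O_part_bd A a n = card {M\<in>Pb A a n. odd (size M)}"
    unfolding E_part_bd_def O_part_bd_def Pb_def by (rule arg_cong[where f=card]; auto)+
  then show ?thesis using False sign_sum_eq[OF finite_Pb[OF assms]] by (simp add: pbar_bd_def)
qed

lemma count_le_n: "0 \<notin> A \<Longrightarrow> M \<in> Pt A n \<Longrightarrow> count M x \<le> n"
proof -
  assume A: "0 \<notin> A" and M: "M \<in> Pt A n"
  then have "0 \<notin> set_mset M" by (auto simp: Pt_def)
  then have "size M \<le> n" using M size_le_sum by (auto simp: Pt_def)
  then show ?thesis using count_le_size[of M x] by linarith
qed

lemma Phi_cong: "(\<And>j. j < K \<Longrightarrow> Ms j = Ms' j) \<Longrightarrow> Phi b K Ms = Phi b K Ms'"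
  unfolding Phi_def by (rule sum.cong) auto

theorem mainTheorem5:
  fixes \<psi> :: "nat \<Rightarrow> nat" and A :: "nat set" and \<alpha> :: nat and n :: nat
  assumes "inj_on \<psi> {1..}"
    and "\<forall>k\<ge>1. \<psi> k \<ge> 1"
    and "A = \<psi> ` {1..}"
    and "\<alpha> > 0" and "even \<alpha>"
  shows "pbar A n =
    (\<Sum>N \<in> {N :: nat \<Rightarrow> nat. finite {i. N i \<noteq> 0}
                 \<and> n = Sum_any (\<lambda>i. (\<alpha> + 1) ^ i * N i)}.
       Prod_any (\<lambda>j. pbar_bd A \<alpha> (N j)))"
proof -
  define b where "b = \<alpha> + 1"
  define K where "K = Suc n"
  define S where "S = {N :: nat \<Rightarrow> nat. finite {i. N i \<noteq> 0}
                 \<and> n = Sum_any (\<lambda>i. (\<alpha> + 1) ^ i * N i)}"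
  have A0: "0 \<notin> A"
  proof
    assume "0 \<in> A"
    then have "0 \<in> \<psi> ` {1..}" by (subst assms(3)[symmetric])
    then obtain k where k: "k \<in> {1..}" "0 = \<psi> k" by (rule imageE)
    have "1 \<le> k" using k(1) by simp
    then have "\<psi> k \<ge> 1" using assms(2) by blast
    then show False using k(2) by linarith
  qed
  have bpos: "b > 0" and bodd: "odd b" and b2: "b \<ge> 2" using assms(4,5) by (auto simp: b_def)
  have hK: "n < b ^ K"
  proof -
    have "n < 2 ^ n" by (rule less_exp)
    also have "\<dots> \<le> 2 ^ K" by (simp add: K_def)
    also have "\<dots> \<le> b ^ K" using b2 by (rule power_mono) simp
    finally show ?thesis .
  qed
  have bK: "j \<ge> K \<Longrightarrow> n < b ^ j" for j
    using hK power_increasing[of K j b] bpos by linarith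
  have SumK: "Sum_any (\<lambda>i. b ^ i * N i) = (\<Sum>i<K. b ^ i * N i)" if "\<And>j. j \<ge> K \<Longrightarrow> N j = 0" for N
  proof (rule Sum_any.expand_superset)
    show "{a. b ^ a * N a \<noteq> 0} \<subseteq> {..<K}"
      using that by (metis (mono_tags) mem_Collect_eq lessThan_iff mult_0_right not_le subsetI)
  qed simp
  have Sprop: "N j \<le> n \<and> (j \<ge> K \<longrightarrow> N j = 0)" if N: "N \<in> S" for N j
  proof -
    let ?F = "{i. N i \<noteq> 0} \<union> {j}"
    have fin: "finite ?F" using N by (auto simp: S_def)
    have "n = Sum_any (\<lambda>i. b ^ i * N i)" using N by (simp add: S_def b_def)
    also have "\<dots> = (\<Sum>i\<in>?F. b ^ i * N i)"
      by (rule Sum_any.expand_superset[OF fin]) auto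
    finally have "b ^ j * N j \<le> n" using member_le_sum[of j ?F "\<lambda>i. b ^ i * N i"] fin by simp
    moreover have "N j \<le> b ^ j * N j" using bpos by simp
    ultimately have "N j \<le> n" by linarith
    moreover have "N j = 0" if "j \<ge> K"
    proof (rule ccontr)
      assume "N j \<noteq> 0"
      then have "b ^ j \<le> b ^ j * N j" by simp
      then show False using bK[OF that] \<open>b ^ j * N j \<le> n\<close> by linarith
    qed
    ultimately show ?thesis by blast
  qed
  have SumS: "N \<in> S \<Longrightarrow> n = (\<Sum>i<K. b ^ i * N i)" for N
  proof -
    assume N: "N \<in> S"
    have "Sum_any (\<lambda>i. b ^ i * N i) = (\<Sum>i<K. b ^ i * N i)"
      by (rule SumK) (use Sprop[OF N] in blast)
    moreover have "n = Sum_any (\<lambda>i. b ^ i * N i)" using N by (simp add: S_def b_def)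
    ultimately show ?thesis by simp
  qed
  have finS: "finite S"
  proof (rule finite_subset)
    show "S \<subseteq> {f. \<forall>x. (x \<in> {..<K} \<longrightarrow> f x \<in> {..n}) \<and> (x \<notin> {..<K} \<longrightarrow> f x = (0::nat))}"
    proof
      fix N assume N: "N \<in> S"
      show "N \<in> {f. \<forall>x. (x \<in> {..<K} \<longrightarrow> f x \<in> {..n}) \<and> (x \<notin> {..<K} \<longrightarrow> f x = (0::nat))}"
        using Sprop[OF N] by (simp add: not_less)
    qed
    show "finite {f. \<forall>x. (x \<in> {..<K} \<longrightarrow> f x \<in> {..n}) \<and> (x \<notin> {..<K} \<longrightarrow> f x = (0::nat))}"
      by (rule finite_set_of_finite_funs) auto
  qed
  define sg where "sg = (\<lambda>M :: nat multiset. (-1::int) ^ size M)"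
  define Sig where "Sig = Sigma S (\<lambda>N. PiE {..<K} (\<lambda>j. Pb A \<alpha> (N j)))"
  have "(\<Sum>N\<in>S. Prod_any (\<lambda>j. pbar_bd A \<alpha> (N j)))
      = (\<Sum>N\<in>S. \<Sum>Ms\<in>PiE {..<K} (\<lambda>j. Pb A \<alpha> (N j)). \<Prod>j<K. sg (Ms j))"
  proof (rule sum.cong[OF refl])
    fix N assume N: "N \<in> S"
    have "Prod_any (\<lambda>j. pbar_bd A \<alpha> (N j)) = (\<Prod>j<K. pbar_bd A \<alpha> (N j))"
    proof (rule Prod_any.expand_superset)
      show "{a. pbar_bd A \<alpha> (N a) \<noteq> 1} \<subseteq> {..<K}"
      proof
        fix a assume a: "a \<in> {a. pbar_bd A \<alpha> (N a) \<noteq> 1}"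
        show "a \<in> {..<K}"
        proof (rule ccontr)
          assume "a \<notin> {..<K}"
          then have "N a = 0" using Sprop[OF N, of a] by simp
          then show False using a by (simp add: pbar_bd_def)
        qed
      qed
    qed simp
    also have "\<dots> = (\<Prod>j<K. \<Sum>M\<in>Pb A \<alpha> (N j). sg M)"
      by (simp add: pbar_bd_eq[OF A0] sg_def)
    also have "\<dots> = (\<Sum>Ms\<in>PiE {..<K} (\<lambda>j. Pb A \<alpha> (N j)). \<Prod>j<K. sg (Ms j))"
      by (rule prod_sum_PiE) (auto simp: finite_Pb[OF A0])
    finally show "Prod_any (\<lambda>j. pbar_bd A \<alpha> (N j)) = \<dots>" .
  qed
  also have "\<dots> = (\<Sum>(N, Ms)\<in>Sig. \<Prod>j<K. sg (Ms j))"
    unfolding Sig_def by (rule sum.Sigma[OF finS]) (auto intro!: finite_PiE simp: finite_Pb[OF A0])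
  also have "\<dots> = (\<Sum>M\<in>Pt A n. sg M)"
  proof (rule sum.reindex_bij_witness[where j = "\<lambda>(N, Ms). Phi b K Ms"
        and i = "\<lambda>M. (\<lambda>j. if j < K then sum_mset (Psi b M j) else 0, restrict (Psi b M) {..<K})"])
    fix p assume "p \<in> Sig"
    then obtain N Ms where p: "p = (N, Ms)" and N: "N \<in> S" and Ms: "Ms \<in> PiE {..<K} (\<lambda>j. Pb A \<alpha> (N j))"
      by (auto simp: Sig_def)
    have Msj: "set_mset (Ms j) \<subseteq> A \<and> sum_mset (Ms j) = N j \<and> (\<forall>k. count (Ms j) k \<le> \<alpha>)" if "j < K" for j
      using Ms that by (auto simp: Pb_def)
    have PP: "Psi b (Phi b K Ms) j = Ms j" if j: "j < K" for j
    proof (rule multiset_eqI)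
      fix x
      have "count (Psi b (Phi b K Ms) j) x = (\<Sum>i<K. b ^ i * count (Ms i) x) div b ^ j mod b"
        by (simp add: count_Psi count_Phi)
      also have "\<dots> = count (Ms j) x"
        by (rule digits_unique[OF bpos]) (use Msj j in \<open>auto simp: b_def le_imp_less_Suc\<close>)
      finally show "count (Psi b (Phi b K Ms) j) x = count (Ms j) x" .
    qed
    show "(\<lambda>j. if j < K then sum_mset (Psi b ((\<lambda>(N, Ms). Phi b K Ms) p) j) else 0,
          restrict (Psi b ((\<lambda>(N, Ms). Phi b K Ms) p)) {..<K}) = p"
    proof -
      have "(\<lambda>j. if j < K then sum_mset (Psi b (Phi b K Ms) j) else 0) = N"
        using PP Msj Sprop[OF N] by (auto simp: fun_eq_iff not_less)
      moreover have "restrict (Psi b (Phi b K Ms)) {..<K} = Ms"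
        using PP Ms by (auto simp: fun_eq_iff PiE_def extensional_def)
      ultimately show ?thesis unfolding p by (simp only: prod.case)
    qed
    show "(\<lambda>(N, Ms). Phi b K Ms) p \<in> Pt A n"
    proof -
      have "set_mset (Phi b K Ms) \<subseteq> A"
      proof
        fix x assume "x \<in># Phi b K Ms"
        then have "count (Phi b K Ms) x \<noteq> 0" by simp
        then have "(\<Sum>i<K. b ^ i * count (Ms i) x) \<noteq> 0" unfolding count_Phi .
        then have "\<exists>i\<in>{..<K}. b ^ i * count (Ms i) x \<noteq> 0"
        proof (rule contrapos_np)
          assume "\<not> (\<exists>i\<in>{..<K}. b ^ i * count (Ms i) x \<noteq> 0)"
          then show "(\<Sum>i<K. b ^ i * count (Ms i) x) = 0" by (intro sum.neutral) blast
        qed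
        then obtain i where i: "i \<in> {..<K}" "b ^ i * count (Ms i) x \<noteq> 0" by blast
        then have "i < K" "count (Ms i) x \<noteq> 0" by auto
        then show "x \<in> A" using Msj[of i] by (auto simp: count_inI)
      qed
      moreover have "sum_mset (Phi b K Ms) = n"
        using SumS[OF N] Msj by (simp add: sum_mset_Phi)
      ultimately show ?thesis by (simp add: p Pt_def)
    qed
    show "sg ((\<lambda>(N, Ms). Phi b K Ms) p) = (case p of (N, Ms) \<Rightarrow> \<Prod>j<K. sg (Ms j))"
      by (simp add: p sg_def sign_Phi[OF bodd])
  next
    fix M assume M: "M \<in> Pt A n"
    have PhiPsi: "Phi b K (Psi b M) = M"
    proof (rule multiset_eqI)
      fix x
      have "count M x < b ^ K" using count_le_n[OF A0 M, of x] hK by linarith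
      then show "count (Phi b K (Psi b M)) x = count M x"
        by (simp add: count_Phi count_Psi digits_sum[OF bpos])
    qed
    show "(\<lambda>(N, Ms). Phi b K Ms)
        (\<lambda>j. if j < K then sum_mset (Psi b M j) else 0, restrict (Psi b M) {..<K}) = M"
      using PhiPsi Phi_cong[of K "restrict (Psi b M) {..<K}" "Psi b M" b] by simp
    define N' where "N' = (\<lambda>j. if j < K then sum_mset (Psi b M j) else 0)"
    have N'S: "N' \<in> S"
    proof -
      have "finite {i. N' i \<noteq> 0}"
        by (rule finite_subset[of _ "{..<K}"]) (auto simp: N'_def split: if_splits)
      moreover have "Sum_any (\<lambda>i. b ^ i * N' i) = n"
      proof -
        have "Sum_any (\<lambda>i. b ^ i * N' i) = (\<Sum>i<K. b ^ i * N' i)"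
          by (rule SumK) (simp add: N'_def)
        also have "\<dots> = (\<Sum>i<K. b ^ i * sum_mset (Psi b M i))"
          by (simp add: N'_def)
        also have "\<dots> = n" using PhiPsi M by (simp add: sum_mset_Phi[symmetric] Pt_def)
        finally show ?thesis .
      qed
      ultimately show ?thesis by (simp add: S_def b_def)
    qed
    have "restrict (Psi b M) {..<K} \<in> PiE {..<K} (\<lambda>j. Pb A \<alpha> (N' j))"
    proof (rule restrict_PiE_iff[THEN iffD2], intro ballI)
      fix j assume j: "j \<in> {..<K}"
      have "set_mset (Psi b M j) \<subseteq> A"
      proof
        fix x assume "x \<in># Psi b M j"
        then have "count (Psi b M j) x \<noteq> 0" by simp
        then have "count M x div b ^ j mod b \<noteq> 0" unfolding count_Psi .
        then have "count M x \<noteq> 0" by (metis div_0 mod_0)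
        then show "x \<in> A" using M by (auto simp: Pt_def count_inI)
      qed
      moreover have "count (Psi b M j) k \<le> \<alpha>" for k
        using bpos by (simp add: count_Psi b_def less_Suc_eq_le[symmetric])
      ultimately show "Psi b M j \<in> Pb A \<alpha> (N' j)" using j by (simp add: Pb_def N'_def)
    qed
    then show "(\<lambda>j. if j < K then sum_mset (Psi b M j) else 0, restrict (Psi b M) {..<K}) \<in> Sig"
      using N'S by (simp add: Sig_def N'_def)
  qed
  also have "\<dots> = pbar A n" by (simp add: pbar_eq[OF A0] sg_def)
  finally show ?thesis by (simp add: S_def)
qed

end
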